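(* Let $\mathcal{A}\in\mathbb{C}^{I_{1\ldots N}\times I_{1\ldots N}}$ and let $\mathcal{N}\in\mathbb{C}^{I_{1\ldots N}\times I_{1\ldots N}}$ be a Hermitian positive definite tensor. If $\mathcal{A}$ is weighted normal, i.e. $\mathcal{A}^{\#}_{\mathcal{N}\mathcal{N}}*_N\mathcal{A}=\mathcal{A}*_N\mathcal{A}^{\#}_{\mathcal{N}\mathcal{N}}$, then $\mathcal{A}*_N\mathcal{A}^{\dagger}_{\mathcal{N},\mathcal{N}}=\mathcal{A}^{\dagger}_{\mathcal{N},\mathcal{N}}*_N\mathcal{A}$.
   Context: Write $I_{1\ldots N}$ for $I_1\times\cdots\times I_N$. Einstein product: $(\mathcal{A}*_N\mathcal{B})_{i_1\ldots i_Nj_1\ldots j_N}=\sum_{k_1,\ldots,k_N}a_{i_1\ldots i_Nk_1\ldots k_N}b_{k_1\ldots k_Nj_1\ldots j_N}$. $\mathcal{A}^H$ is the conjugate transpose. Inverses are with respect to $*_N$ and the identity tensor (entry 1 where the two index blocks coincide, 0 otherwise). $\mathcal{N}$ is Hermitian positive definite if $\mathcal{N}^H=\mathcal{N}$ and $\mathcal{X}^H*_N\mathcal{N}*_N\mathcal{X}>0$ for all nonzero $\mathcal{X}$. Weighted conjugate transpose: $\mathcal{A}^{\#}_{\mathcal{N}\mathcal{N}}=\mathcal{N}^{-1}*_N\mathcal{A}^H*_N\mathcal{N}$. Weighted Moore-Penrose inverse $\mathcal{A}^{\dagger}_{\mathcal{N},\mathcal{N}}$: the unique $\mathcal{X}$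 with $\mathcal{A}*_N\mathcal{X}*_N\mathcal{A}=\mathcal{A}$, $\mathcal{X}*_N\mathcal{A}*_N\mathcal{X}=\mathcal{X}$, $(\mathcal{N}*_N\mathcal{A}*_N\mathcal{X})^H=\mathcal{N}*_N\mathcal{A}*_N\mathcal{X}$, $(\mathcal{N}*_N\mathcal{X}*_N\mathcal{A})^H=\mathcal{N}*_N\mathcal{X}*_N\mathcal{A}$. *)

theory Defs
  imports "HOL-Analysis.Analysis"
begin

text \<open>Index tuples (i_1,...,i_N) with 0 \<le> i_k < I_k, represented as lists;
  I is the list of dimensions [I_1,...,I_N]. A tensor in
  C^(I_1..N x I_1..N) is a function of two index blocks; only its values on
  valid index tuples matter.\<close>

type_synonym tensor = "nat list \<Rightarrow> nat list \<Rightarrow> complex"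

definition idx :: "nat list \<Rightarrow> nat list set" where
  "idx I = {is. length is = length I \<and> (\<forall>k<length I. is ! k < I ! k)}"

definition teq :: "nat list \<Rightarrow> tensor \<Rightarrow> tensor \<Rightarrow> bool" where
  "teq I A B \<longleftrightarrow> (\<forall>i\<in>idx I. \<forall>j\<in>idx I. A i j = B i j)"

definition einstein :: "nat list \<Rightarrow> tensor \<Rightarrow> tensor \<Rightarrow> tensor" where
  "einstein I A B = (\<lambda>i j. \<Sum>k\<in>idx I. A i k * B k j)"

definition tid :: tensor where
  "tid = (\<lambda>i j. if i = j then 1 else 0)"

definition tH :: "tensor \<Rightarrow> tensor" where
  "tH A = (\<lambda>i j. cnj (A j i))"

definition hermitian :: "nat list \<Rightarrow> tensor \<Rightarrow> bool" where
  "hermitian I A \<longleftrightarrow> teq I (tH A) A"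

definition hpd :: "nat list \<Rightarrow> tensor \<Rightarrow> bool" where
  "hpd I M \<longleftrightarrow> hermitian I M \<and>
     (\<forall>x :: nat list \<Rightarrow> complex. (\<exists>i\<in>idx I. x i \<noteq> 0) \<longrightarrow>
        (\<Sum>i\<in>idx I. \<Sum>j\<in>idx I. cnj (x i) * M i j * x j) > 0)"

definition is_tinv :: "nat list \<Rightarrow> tensor \<Rightarrow> tensor \<Rightarrow> bool" where
  "is_tinv I A X \<longleftrightarrow> teq I (einstein I A X) tid \<and> teq I (einstein I X A) tid"

definition tinv :: "nat list \<Rightarrow> tensor \<Rightarrow> tensor" where
  "tinv I A = (SOME X. is_tinv I A X)"

definition wct :: "nat list \<Rightarrow> tensor \<Rightarrow> tensor \<Rightarrow> tensor" where
  "wct I M A = einstein I (einstein I (tinv I M) (tH A)) M"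

definition is_wmp :: "nat list \<Rightarrow> tensor \<Rightarrow> tensor \<Rightarrow> tensor \<Rightarrow> bool" where
  "is_wmp I M A X \<longleftrightarrow>
     teq I (einstein I (einstein I A X) A) A \<and>
     teq I (einstein I (einstein I X A) X) X \<and>
     teq I (tH (einstein I M (einstein I A X))) (einstein I M (einstein I A X)) \<and>
     teq I (tH (einstein I M (einstein I X A))) (einstein I M (einstein I X A))"

definition wmp :: "nat list \<Rightarrow> tensor \<Rightarrow> tensor \<Rightarrow> tensor" where
  "wmp I M A = (SOME X. is_wmp I M A X)"

end

theory Submission
  imports Defs "HOL-Library.Function_Algebras"
begin


definition rs :: "nat list set \<Rightarrow> tensor \<Rightarrow> tensor" where
  "rs S A = (\<lambda>i j. if i \<in> S \<and> j \<in> S then A i j else 0)"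
definition mul :: "nat list set \<Rightarrow> tensor \<Rightarrow> tensor \<Rightarrow> tensor" where
  "mul S A B = rs S (\<lambda>i j. \<Sum>k\<in>S. A i k * B k j)"
definition one :: "nat list set \<Rightarrow> tensor" where "one S = rs S tid"
definition sc :: "complex \<Rightarrow> tensor \<Rightarrow> tensor" where "sc c A = (\<lambda>i j. c * A i j)"

lemma rs_rs[simp]: "rs S (rs S A) = rs S A" by (auto simp: rs_def fun_eq_iff)
lemma rs_mul[simp]: "rs S (mul S A B) = mul S A B" by (auto simp: mul_def rs_def fun_eq_iff)
lemma mul_rs1[simp]: "mul S (rs S A) B = mul S A B" by (auto simp: mul_def rs_def fun_eq_iff intro!: sum.cong)
lemma mul_rs2[simp]: "mul S A (rs S B) = mul S A B" by (auto simp: mul_def rs_def fun_eq_iff intro!: sum.cong)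
lemma rs_one[simp]: "rs S (one S) = one S" by (simp add: one_def)
lemma rs_add: "rs S (A + B) = rs S A + rs S B" by (auto simp: rs_def fun_eq_iff)
lemma rs_diff: "rs S (A - B) = rs S A - rs S B" by (auto simp: rs_def fun_eq_iff)
lemma rs_sc: "rs S (sc c A) = sc c (rs S A)" by (auto simp: rs_def sc_def fun_eq_iff)
lemma rs_zero[simp]: "rs S 0 = 0" by (auto simp: rs_def fun_eq_iff)
lemma rs_tH: "rs S (tH A) = tH (rs S A)" by (auto simp: rs_def tH_def fun_eq_iff)

lemma mul_assoc: "mul S (mul S A B) C = mul S A (mul S B C)"
proof -
  have "(\<Sum>k\<in>S. (\<Sum>l\<in>S. A i l * B l k) * C k j) = (\<Sum>l\<in>S. A i l * (\<Sum>k\<in>S. B l k * C k j))" for i j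
  proof -
    have "(\<Sum>k\<in>S. (\<Sum>l\<in>S. A i l * B l k) * C k j) = (\<Sum>k\<in>S. \<Sum>l\<in>S. A i l * B l k * C k j)"
      by (simp add: sum_distrib_right)
    also have "\<dots> = (\<Sum>l\<in>S. \<Sum>k\<in>S. A i l * B l k * C k j)" by (rule sum.swap)
    also have "\<dots> = (\<Sum>l\<in>S. A i l * (\<Sum>k\<in>S. B l k * C k j))"
      by (simp add: sum_distrib_left mult.assoc)
    finally show ?thesis .
  qed
  then show ?thesis by (auto simp: mul_def rs_def fun_eq_iff intro!: sum.cong)
qed

lemma mul_one1: assumes fin: "finite S" shows "mul S (one S) A = rs S A"
proof -
  have "(\<Sum>k\<in>S. (if i = k then 1 else 0) * A k j) = (\<Sum>k\<in>S. if i = k then A k j else 0)" for i j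
    by (rule sum.cong) auto
  then show ?thesis using fin by (auto simp: mul_def rs_def one_def tid_def fun_eq_iff)
qed
lemma mul_one2: assumes fin: "finite S" shows "mul S A (one S) = rs S A"
proof -
  have "(\<Sum>k\<in>S. A i k * (if k \<in> S \<and> j \<in> S then (if k = j then 1 else 0) else 0)) = (\<Sum>k\<in>S. if k = j then A i k else 0)" if "j \<in> S" for i j
    by (rule sum.cong) (auto simp: that)
  then show ?thesis using fin by (auto simp: mul_def rs_def one_def tid_def fun_eq_iff)
qed

lemma mul_add1: "mul S (A + B) C = mul S A C + mul S B C"
  by (auto simp: mul_def rs_def distrib_right sum.distrib fun_eq_iff)
lemma mul_add2: "mul S C (A + B) = mul S C A + mul S C B"
  by (auto simp: mul_def rs_def distrib_left sum.distrib fun_eq_iff)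
lemma mul_diff1: "mul S (A - B) C = mul S A C - mul S B C"
  by (auto simp: mul_def rs_def left_diff_distrib sum_subtractf fun_eq_iff)
lemma mul_diff2: "mul S C (A - B) = mul S C A - mul S C B"
  by (auto simp: mul_def rs_def right_diff_distrib sum_subtractf fun_eq_iff)
lemma mul_sc1: "mul S (sc c A) B = sc c (mul S A B)"
  by (auto simp: mul_def rs_def sc_def sum_distrib_left mult.assoc fun_eq_iff)
lemma mul_sc2: "mul S A (sc c B) = sc c (mul S A B)"
  by (auto simp: mul_def rs_def sc_def sum_distrib_left mult.assoc mult.left_commute fun_eq_iff)
lemma mul_zero1[simp]: "mul S 0 A = 0" by (auto simp: mul_def rs_def fun_eq_iff)
lemma mul_zero2[simp]: "mul S A 0 = 0" by (auto simp: mul_def rs_def fun_eq_iff)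
lemma tH_tH[simp]: "tH (tH A) = A" by (simp add: tH_def)
lemma tH_mul: "tH (mul S A B) = mul S (tH B) (tH A)"
  by (auto simp: mul_def rs_def tH_def mult.commute fun_eq_iff)
lemma tH_one: "tH (one S) = one S" by (auto simp: one_def rs_def tH_def tid_def fun_eq_iff)
lemma tH_diff: "tH (A - B) = tH A - tH B" by (auto simp: tH_def fun_eq_iff)
lemma tH_zero[simp]: "tH 0 = 0" by (auto simp: tH_def fun_eq_iff)


locale wctx =
  fixes S :: "nat list set" and Mr Ti :: tensor
  assumes fin: "finite S" and rsM: "rs S Mr = Mr" and rsT: "rs S Ti = Ti"
    and hM: "tH Mr = Mr" and MT: "mul S Mr Ti = one S" and TM: "mul S Ti Mr = one S"
    and pos: "\<And>X. rs S X = X \<Longrightarrow> mul S (tH X) (mul S Mr X) = 0 \<Longrightarrow> X = 0"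
begin

abbreviation mm (infixl "\<odot>" 70) where "A \<odot> B \<equiv> mul S A B"
definition adj where "adj C = Ti \<odot> (tH C \<odot> Mr)"

lemma one_l: "rs S A = A \<Longrightarrow> one S \<odot> A = A" using mul_one1[OF fin] by simp
lemma one_r: "rs S A = A \<Longrightarrow> A \<odot> one S = A" using mul_one2[OF fin] by simp
lemma rs_adj[simp]: "rs S (adj C) = adj C" by (simp add: adj_def)

lemma MTX: "Mr \<odot> (Ti \<odot> X) = rs S X"
  by (simp add: mul_assoc[symmetric] MT mul_one1[OF fin])
lemma TMX: "Ti \<odot> (Mr \<odot> X) = rs S X"
  by (simp add: mul_assoc[symmetric] TM mul_one1[OF fin])

lemma tH_Ti: "tH Ti = Ti"
proof -
  have r: "rs S (tH Ti) = tH Ti" using rsT by (simp add: rs_tH)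
  have "tH Ti = tH Ti \<odot> (Mr \<odot> Ti)" using r by (simp add: MT one_r)
  also have "\<dots> = (tH Ti \<odot> tH Mr) \<odot> Ti" by (simp add: mul_assoc hM)
  also have "\<dots> = Ti" by (simp add: tH_mul[symmetric] MT tH_one one_l rsT)
  finally show ?thesis .
qed

lemma adj_mul: "adj (C \<odot> D) = adj D \<odot> adj C"
  by (simp add: adj_def tH_mul mul_assoc MTX)

lemma adj_adj: "rs S C = C \<Longrightarrow> adj (adj C) = C"
  by (simp add: adj_def tH_mul mul_assoc hM tH_Ti MTX TMX TM one_r)

lemma adj_diff: "adj (C - D) = adj C - adj D"
  by (simp add: adj_def tH_diff mul_diff1 mul_diff2)

lemma adj_zero[simp]: "adj 0 = 0" by (simp add: adj_def)

lemma pos_adj: assumes "rs S X = X" "adj X \<odot> X = 0" shows "X = 0"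
proof (rule pos[OF assms(1)])
  have "tH X \<odot> (Mr \<odot> X) = Mr \<odot> (adj X \<odot> X)"
    by (simp add: adj_def mul_assoc MTX rs_tH)
  then show "tH X \<odot> (Mr \<odot> X) = 0" using assms(2) by simp
qed

context
  fixes A assumes rsA: "rs S A = A" and nor: "adj A \<odot> A = A \<odot> adj A"
begin

lemma N1: assumes "rs S Y = Y" "A \<odot> Y = 0" shows "adj A \<odot> Y = 0"
proof (rule pos_adj)
  show "rs S (adj A \<odot> Y) = adj A \<odot> Y" by simp
  have "adj (adj A \<odot> Y) \<odot> (adj A \<odot> Y) = adj Y \<odot> ((adj (adj A) \<odot> adj A) \<odot> Y)"
    by (simp add: adj_mul mul_assoc)
  also have "\<dots> = adj Y \<odot> (adj A \<odot> (A \<odot> Y))" by (simp add: adj_adj rsA nor[symmetric] mul_assoc)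
  finally show "adj (adj A \<odot> Y) \<odot> (adj A \<odot> Y) = 0" using assms by simp
qed

lemma N2: assumes "rs S Y = Y" "adj A \<odot> Y = 0" shows "A \<odot> Y = 0"
proof (rule pos_adj)
  show "rs S (A \<odot> Y) = A \<odot> Y" by simp
  have "adj (A \<odot> Y) \<odot> (A \<odot> Y) = adj Y \<odot> ((adj A \<odot> A) \<odot> Y)"
    by (simp add: adj_mul mul_assoc)
  also have "\<dots> = adj Y \<odot> (A \<odot> (adj A \<odot> Y))" by (simp add: nor mul_assoc)
  finally show "adj (A \<odot> Y) \<odot> (A \<odot> Y) = 0" using assms by simp
qed

lemma N3: assumes "A \<odot> (A \<odot> Y) = 0" shows "A \<odot> Y = 0"
proof (rule pos_adj)
  show "rs S (A \<odot> Y) = A \<odot> Y" by simp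
  have "adj A \<odot> (A \<odot> Y) = 0" by (rule N1) (simp_all add: assms)
  then show "adj (A \<odot> Y) \<odot> (A \<odot> Y) = 0" by (simp add: adj_mul mul_assoc)
qed


lemma exists_wmp:
  assumes rs0: "rs S S0 = S0" and c: "A \<odot> S0 = S0 \<odot> A" and e: "A \<odot> (A \<odot> S0) = A"
  shows "\<exists>X. rs S X = X \<and> A \<odot> X \<odot> A = A \<and> X \<odot> A \<odot> X = X \<and> adj (A \<odot> X) = A \<odot> X \<and> adj (X \<odot> A) = X \<odot> A"
proof -
  define P where "P = A \<odot> S0"
  define X where "X = A \<odot> (S0 \<odot> S0)"
  have AX: "A \<odot> X = P"
  proof -
    have "A \<odot> X = (A \<odot> (A \<odot> S0)) \<odot> S0" by (simp add: X_def mul_assoc)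
    then show ?thesis by (simp add: e P_def)
  qed
  have XA: "X \<odot> A = P"
  proof -
    have "X \<odot> A = A \<odot> (S0 \<odot> (S0 \<odot> A))" by (simp add: X_def mul_assoc)
    also have "\<dots> = A \<odot> (S0 \<odot> (A \<odot> S0))" by (simp add: c)
    also have "\<dots> = A \<odot> ((S0 \<odot> A) \<odot> S0)" by (simp add: mul_assoc)
    also have "\<dots> = (A \<odot> (A \<odot> S0)) \<odot> S0" by (simp add: c[symmetric] mul_assoc)
    finally show ?thesis by (simp add: e P_def)
  qed
  have PA: "P \<odot> A = A" by (simp add: P_def mul_assoc c[symmetric] e)
  have p1: "A \<odot> X \<odot> A = A" by (simp add: AX PA)
  have p2: "X \<odot> A \<odot> X = X"
  proof -
    have "X \<odot> A \<odot> X = P \<odot> X" by (simp add: XA)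
    also have "\<dots> = (P \<odot> A) \<odot> (S0 \<odot> S0)" by (simp add: X_def mul_assoc)
    finally show ?thesis by (simp add: PA X_def)
  qed
  have "A \<odot> (one S - P) = 0" by (simp add: mul_diff2 one_r rsA P_def e)
  then have "adj A \<odot> (one S - P) = 0" by (intro N1) (simp_all add: rs_diff P_def)
  then have "adj A \<odot> P = adj A" by (simp add: mul_diff2 one_r)
  then have "adj (adj A \<odot> P) = adj (adj A)" by simp
  then have aPA: "adj P \<odot> A = A" by (simp add: adj_mul adj_adj rsA)
  have aPP: "adj P \<odot> P = P" by (simp add: P_def mul_assoc[symmetric]) (simp add: aPA[unfolded P_def])
  have "adj P = adj (adj P \<odot> P)" by (simp add: aPP)
  also have "\<dots> = adj P \<odot> P"
  proof -
    have rP: "rs S P = P" by (simp add: P_def)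
    show ?thesis by (simp only: adj_mul adj_adj[OF rP])
  qed
  finally have sa: "adj P = P" using aPP by simp
  show ?thesis
  proof -
    have rX: "rs S X = X" by (simp add: X_def)
    show ?thesis using rX p1 p2 AX XA sa by metis
  qed
qed

lemma commute_wmp:
  assumes rsX: "rs S X = X" and p1: "A \<odot> X \<odot> A = A" and p2: "X \<odot> A \<odot> X = X"
    and p3: "adj (A \<odot> X) = A \<odot> X" and p4: "adj (X \<odot> A) = X \<odot> A"
  shows "A \<odot> X = X \<odot> A"
proof -
  have "A \<odot> (one S - X \<odot> A) = 0"
    using p1 by (simp add: mul_diff2 one_r rsA mul_assoc)
  then have "adj A \<odot> (one S - X \<odot> A) = 0" by (intro N1) (simp_all add: rs_diff)
  then have "adj A \<odot> (X \<odot> A) = adj A" by (simp add: mul_diff2 one_r)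
  then have "adj (adj A \<odot> (X \<odot> A)) = adj (adj A)" by simp
  then have "adj (X \<odot> A) \<odot> adj (adj A) = adj (adj A)" by (simp only: adj_mul)
  then have QA: "X \<odot> A \<odot> A = A" by (simp only: p4 adj_adj[OF rsA])
  have "adj (A \<odot> X \<odot> A) = adj A" using p1 by simp
  then have "adj A \<odot> adj (A \<odot> X) = adj A" by (simp only: adj_mul mul_assoc)
  then have "adj A \<odot> (A \<odot> X) = adj A" by (simp only: p3)
  then have "adj A \<odot> (one S - A \<odot> X) = 0" by (simp add: mul_diff2 one_r)
  then have "A \<odot> (one S - A \<odot> X) = 0" by (intro N2) (simp_all add: rs_diff)
  then have AP: "A \<odot> (A \<odot> X) = A" by (simp add: mul_diff2 one_r rsA)
  have "A \<odot> X = (X \<odot> A \<odot> A) \<odot> X" by (simp add: QA)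
  also have "\<dots> = X \<odot> (A \<odot> (A \<odot> X))" by (simp add: mul_assoc)
  also have "\<dots> = X \<odot> A" by (simp add: AP)
  finally show ?thesis .
qed

end
end



lemma sum_tensor_apply: "(sum f T :: tensor) i j = (\<Sum>x\<in>T. f x i j)"
  by (induction T rule: infinite_finite_induct) auto

interpretation tv: Vector_Spaces.vector_space sc
  by unfold_locales (auto simp: sc_def fun_eq_iff algebra_simps)

primrec pw :: "nat list set \<Rightarrow> tensor \<Rightarrow> nat \<Rightarrow> tensor" where
  "pw S A 0 = one S" | "pw S A (Suc n) = mul S A (pw S A n)"

primrec heval :: "nat list set \<Rightarrow> complex list \<Rightarrow> tensor \<Rightarrow> tensor" where
  "heval S [] A = 0" | "heval S (c # cs) A = sc c (one S) + mul S A (heval S cs A)"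

lemma rs_pw[simp]: "rs S (pw S A k) = pw S A k" by (cases k) auto
lemma rs_heval[simp]: "rs S (heval S cs A) = heval S cs A"
  by (cases cs) (auto simp: rs_add rs_sc)

lemma sc_zero[simp]: "sc 0 X = 0" by (simp add: sc_def fun_eq_iff)
lemma sc_one[simp]: "sc 1 X = X" by (simp add: sc_def fun_eq_iff)

lemma mul_sum2: "mul S A (sum f T) = (\<Sum>x\<in>T. mul S A (f x))"
proof (cases "finite T")
  case True
  then show ?thesis
  proof (induction T rule: finite_induct)
    case empty then show ?case by (simp only: sum.empty mul_zero2)
  next
    case (insert x F) then show ?case by (simp only: sum.insert[OF insert.hyps] mul_add2 insert.IH)
  qed
next
  case False then show ?thesis by (simp only: sum.infinite[OF False] mul_zero2)
qed

lemma heval_sum: "heval S cs A = (\<Sum>i<length cs. sc (cs ! i) (pw S A i))"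
proof (induction cs)
  case Nil then show ?case by simp
next
  case (Cons c cs)
  have "heval S (c # cs) A = sc c (one S) + (\<Sum>i<length cs. sc (cs ! i) (pw S A (Suc i)))"
    by (simp add: Cons mul_sum2 mul_sc2)
  also have "\<dots> = (\<Sum>i<length (c # cs). sc ((c # cs) ! i) (pw S A i))"
    by (simp add: sum.lessThan_Suc_shift del: sum.lessThan_Suc)
  finally show ?case .
qed

lemma heval_rep: assumes "finite S"
  shows "heval S (replicate k 0 @ L) A = mul S (pw S A k) (heval S L A)"
proof (induction k)
  case 0 then show ?case by (simp add: mul_one1[OF assms])
next
  case (Suc k) then show ?case by (simp add: mul_assoc)
qed

lemma heval_comm: assumes "finite S" "rs S A = A"
  shows "mul S A (heval S cs A) = mul S (heval S cs A) A"
proof (induction cs)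
  case Nil then show ?case by (simp only: heval.simps mul_zero1 mul_zero2)
next
  case (Cons c cs)
  have e1: "mul S A (heval S (c#cs) A) = sc c A + mul S A (mul S A (heval S cs A))"
    by (simp only: heval.simps mul_add2 mul_sc2 mul_one2[OF assms(1)] assms(2))
  have e2: "mul S (heval S (c#cs) A) A = sc c A + mul S A (mul S (heval S cs A) A)"
    by (simp only: heval.simps mul_add1 mul_sc1 mul_one1[OF assms(1)] assms(2) mul_assoc)
  show ?case unfolding e1 e2 Cons.IH ..
qed

definition E :: "nat list \<Rightarrow> nat list \<Rightarrow> tensor" where
  "E a b = (\<lambda>i j. if i = a \<and> j = b then 1 else 0)"

lemma rs_in_span: assumes "finite S" "rs S X = X"
  shows "X \<in> tv.span ((\<lambda>(a,b). E a b) ` (S \<times> S))"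
proof -
  have eq: "X = (\<Sum>p\<in>S \<times> S. sc (X (fst p) (snd p)) (E (fst p) (snd p)))"
  proof (rule ext, rule ext)
    fix i j
    have "(\<Sum>p\<in>S \<times> S. sc (X (fst p) (snd p)) (E (fst p) (snd p))) i j
        = (\<Sum>p\<in>S \<times> S. if p = (i, j) then X i j else 0)"
      by (simp add: sum_tensor_apply sc_def E_def) (rule sum.cong, auto)
    also have "\<dots> = (if (i, j) \<in> S \<times> S then X i j else 0)"
      using assms(1) by (simp add: sum.delta)
    also have "\<dots> = X i j"
      using fun_cong[OF fun_cong[OF assms(2)], of i j] by (auto simp: rs_def)
    finally show "X i j = (\<Sum>p\<in>S \<times> S. sc (X (fst p) (snd p)) (E (fst p) (snd p))) i j" ..
  qed
  show ?thesis
    by (subst eq, rule tv.span_sum, rule tv.span_scale, rule tv.span_base) auto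
qed

lemma dependency: assumes fin: "finite S"
  shows "\<exists>f n. (\<exists>i<n. f i \<noteq> (0::complex)) \<and> (\<Sum>i<n. sc (f i) (pw S A i)) = 0"
proof -
  define N where "N = card (S \<times> S)"
  define B where "B = (\<lambda>(a,b). E a b) ` (S \<times> S)"
  have finB: "finite B" using fin by (simp add: B_def)
  have cB: "card B \<le> N" unfolding B_def N_def by (rule card_image_le) (simp add: fin)
  show ?thesis
  proof (cases "inj_on (pw S A) {..N}")
    case False
    then obtain i j where ij: "i \<le> N" "j \<le> N" "i \<noteq> j" "pw S A i = pw S A j"
      by (auto simp: inj_on_def)
    define f where "f = (\<lambda>t. if t = i then 1 else if t = j then -1 else (0::complex))"
    have "(\<Sum>t<Suc N. sc (f t) (pw S A t)) =
          (\<Sum>t<Suc N. (if t = i then pw S A i else 0) + (if t = j then - pw S A j else 0))"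
      by (rule sum.cong) (auto simp: f_def ij sc_def fun_eq_iff)
    also have "\<dots> = 0" using ij by (simp add: sum.distrib)
    finally show ?thesis using ij by (intro exI[of _ f] exI[of _ "Suc N"]) (auto simp: f_def)
  next
    case True
    define P where "P = pw S A ` {..N}"
    have cP: "card P = Suc N" using True by (simp add: P_def card_image)
    have "P \<subseteq> tv.span B" using rs_in_span[OF fin] by (auto simp: P_def B_def)
    then have "tv.dependent P" using tv.independent_span_bound[OF finB, of P] cP cB by auto
    then obtain T u where T: "finite T" "T \<subseteq> P" "(\<Sum>v\<in>T. sc (u v) v) = 0" "\<exists>v\<in>T. u v \<noteq> 0"
      unfolding tv.dependent_explicit by blast
    define f where "f = (\<lambda>t. if pw S A t \<in> T then u (pw S A t) else 0)"
    define K where "K = {t \<in> {..N}. pw S A t \<in> T}"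
    have KT: "pw S A ` K = T" using T(2) by (auto simp: K_def P_def)
    have "(\<Sum>t<Suc N. sc (f t) (pw S A t)) = (\<Sum>t\<in>{..N}. if pw S A t \<in> T then sc (u (pw S A t)) (pw S A t) else 0)"
      by (rule sum.cong) (auto simp: f_def lessThan_Suc_atMost)
    also have "\<dots> = (\<Sum>t\<in>K. sc (u (pw S A t)) (pw S A t))"
      by (simp add: sum.inter_filter[symmetric] K_def)
    also have "\<dots> = (\<Sum>v\<in>pw S A ` K. sc (u v) v)"
    proof -
      have injK: "inj_on (pw S A) K" using True by (rule inj_on_subset) (auto simp: K_def)
      then show ?thesis by (simp add: sum.reindex)
    qed
    also have "\<dots> = (\<Sum>v\<in>T. sc (u v) v)" by (simp only: KT)
    also have "\<dots> = 0" by (rule T(3))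
    finally have s0: "(\<Sum>t<Suc N. sc (f t) (pw S A t)) = 0" .
    from T(4) obtain v where "v \<in> T" "u v \<noteq> 0" by blast
    then obtain t where "t \<le> N" "pw S A t = v" using T(2) by (auto simp: P_def)
    then have "f t \<noteq> 0" "t < Suc N" using \<open>v \<in> T\<close> \<open>u v \<noteq> 0\<close> by (auto simp: f_def)
    then show ?thesis using s0 by blast
  qed
qed

lemma annihilator: assumes fin: "finite S"
  shows "\<exists>k c cs. c \<noteq> 0 \<and> mul S (pw S A k) (sc c (one S) + mul S A (heval S cs A)) = 0"
proof -
  obtain f n where f: "\<exists>i<n. f i \<noteq> (0::complex)" "(\<Sum>i<n. sc (f i) (pw S A i)) = 0"
    using dependency[OF fin] by blast
  define ds where "ds = map f [0..<n]"
  have h0: "heval S ds A = 0" unfolding heval_sum ds_def using f(2) by simp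
  define k where "k = length (takeWhile (\<lambda>c. c = 0) ds)"
  define L where "L = dropWhile (\<lambda>c. c = 0) ds"
  have tw: "takeWhile (\<lambda>c. c = 0) ds = replicate k 0"
    unfolding k_def by (rule replicate_length_same[symmetric]) (auto dest: set_takeWhileD)
  have dsL: "ds = replicate k 0 @ L" using takeWhile_dropWhile_id[of "\<lambda>c. c = 0" ds] tw L_def by simp
  have "L \<noteq> []"
  proof
    assume "L = []"
    then have "\<forall>x\<in>set ds. x = 0" using dsL by simp
    then show False using f(1) by (auto simp: ds_def)
  qed
  then obtain c cs where Lc: "L = c # cs" by (cases L) auto
  have dne: "dropWhile (\<lambda>c. c = 0) ds \<noteq> []" using \<open>L \<noteq> []\<close> by (simp add: L_def)
  have "hd (dropWhile (\<lambda>c. c = 0) ds) \<noteq> 0" using hd_dropWhile[OF dne] by simp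
  then have "c \<noteq> 0" using Lc unfolding L_def by simp
  moreover have "mul S (pw S A k) (sc c (one S) + mul S A (heval S cs A)) = 0"
    using h0 heval_rep[OF fin, of k L A] dsL Lc by simp
  ultimately show ?thesis by blast
qed



lemma finite_idx: "finite (idx I)"
proof -
  define m where "m = Max (insert 0 (set I))"
  have "idx I \<subseteq> {xs. set xs \<subseteq> {..<m} \<and> length xs = length I}"
  proof
    fix xs assume "xs \<in> idx I"
    then have l: "length xs = length I" and b: "\<forall>k<length I. xs ! k < I ! k" by (auto simp: idx_def)
    have "set xs \<subseteq> {..<m}"
    proof
      fix x assume "x \<in> set xs"
      then obtain k where k: "k < length xs" "xs ! k = x" by (auto simp: in_set_conv_nth)
      have "I ! k \<le> m" unfolding m_def using k l by (intro Max_ge) auto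
      then show "x \<in> {..<m}" using b k l by force
    qed
    then show "xs \<in> {xs. set xs \<subseteq> {..<m} \<and> length xs = length I}" using l by auto
  qed
  then show ?thesis by (rule finite_subset) (rule finite_lists_length_eq, simp)
qed

lemma lam0[simp]: "(\<lambda>(a::nat list) (b::nat list). (0::complex)) = 0" by (simp add: fun_eq_iff)

lemma teq_rs: "teq I X Y \<longleftrightarrow> rs (idx I) X = rs (idx I) Y"
  by (auto simp: teq_def rs_def fun_eq_iff)

lemma rs_ein: "rs (idx I) (einstein I A B) = mul (idx I) A B"
  by (simp add: mul_def einstein_def)

lemma mul_rsb: "mul S A B = mul S (rs S A) (rs S B)" by simp

lemma pw_cancel:
  assumes inj: "\<forall>Y. rs S Y = Y \<longrightarrow> mul S M Y = 0 \<longrightarrow> Y = 0" and fin: "finite S" and rY: "rs S Y = Y"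
  shows "mul S (pw S M k) Y = 0 \<Longrightarrow> Y = 0"
  using rY
proof (induction k arbitrary: Y)
  case 0 then show ?case by (simp add: mul_one1[OF fin])
next
  case (Suc k)
  have "mul S M (mul S (pw S M k) Y) = 0" using Suc.prems by (simp add: mul_assoc)
  then have "mul S (pw S M k) Y = 0" using inj[rule_format, of "mul S (pw S M k) Y"] by (simp only: rs_mul simp_thms)
  then show ?case using Suc by blast
qed

lemma sc_inv: "c \<noteq> 0 \<Longrightarrow> sc (-1/c) (- sc c X) = X"
  by (simp add: sc_def fun_eq_iff)

lemma (in wctx) pw_norm:
  assumes rsA: "rs S A = A" and nor: "adj A \<odot> A = A \<odot> adj A"
  shows "pw S A (Suc k) \<odot> Y = 0 \<Longrightarrow> A \<odot> Y = 0"
proof (induction k arbitrary: Y)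
  case 0 then show ?case by (simp only: pw.simps one_r[OF rsA])
next
  case (Suc k)
  have "A \<odot> (A \<odot> (pw S A k \<odot> Y)) = 0" using Suc.prems by (simp only: pw.simps mul_assoc)
  then have "A \<odot> (pw S A k \<odot> Y) = 0" by (rule N3[OF rsA nor])
  then have "pw S A (Suc k) \<odot> Y = 0" by (simp only: pw.simps mul_assoc)
  then show ?case by (rule Suc.IH)
qed

lemma (in wctx) herm_iff: "rs S P = P \<Longrightarrow> (tH (Mr \<odot> P) = Mr \<odot> P) \<longleftrightarrow> adj P = P"
proof -
  assume rP: "rs S P = P"
  have t: "tH (Mr \<odot> P) = tH P \<odot> Mr" by (simp add: tH_mul hM)
  show ?thesis
  proof
    assume "tH (Mr \<odot> P) = Mr \<odot> P"
    then show "adj P = P" by (simp add: adj_def t[symmetric] TMX rP)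
  next
    assume "adj P = P"
    then have "Mr \<odot> P = Mr \<odot> adj P" by simp
    also have "\<dots> = tH P \<odot> Mr" by (simp add: adj_def MTX)
    finally show "tH (Mr \<odot> P) = Mr \<odot> P" by (simp add: tH_mul hM)
  qed
qed

theorem theorem4p11:
  fixes I :: "nat list" and A M :: tensor
  assumes "hpd I M"
    and "teq I (einstein I (wct I M A) A) (einstein I A (wct I M A))"
  shows "teq I (einstein I A (wmp I M A)) (einstein I (wmp I M A) A)"
proof -
  define S where "S = idx I"
  have fin: "finite S" by (simp add: S_def finite_idx)
  have rsE: "rs S (einstein I X Y) = mul S X Y" for X Y by (simp add: S_def rs_ein)
  have mulE1: "mul S (einstein I X Y) Z = mul S (mul S X Y) Z" for X Y Z by (metis mul_rs1 rsE)
  have mulE2: "mul S Z (einstein I X Y) = mul S Z (mul S X Y)" for X Y Z by (metis mul_rs2 rsE)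
  have teqS: "teq I X Y \<longleftrightarrow> rs S X = rs S Y" for X Y by (simp add: S_def teq_rs)
  define Mr where "Mr = rs S M"
  have rsM: "rs S Mr = Mr" by (simp add: Mr_def)
  have hM: "tH Mr = Mr" using assms(1)
    by (simp add: hpd_def hermitian_def teq_rs Mr_def rs_tH[symmetric] S_def)
  have pos: "X = 0" if rX: "rs S X = X" and z: "mul S (tH X) (mul S Mr X) = 0" for X
  proof (rule ccontr)
    assume X0: "X \<noteq> 0"
    have "\<exists>i j. X i j \<noteq> 0"
    proof (rule ccontr)
      assume "\<not> (\<exists>i j. X i j \<noteq> 0)"
      then have "X = (\<lambda>a b. 0)" by (intro ext) simp
      then show False using X0 by simp
    qed
    then obtain i j where Xij: "X i j \<noteq> 0" by blast
    have e: "(if i \<in> S \<and> j \<in> S then X i j else 0) = X i j"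
      using fun_cong[OF fun_cong[OF rX], of i j] by (simp only: rs_def)
    then have ij: "i \<in> S" "j \<in> S" using Xij by (auto split: if_splits)
    have H: "\<forall>x :: nat list \<Rightarrow> complex. (\<exists>i\<in>S. x i \<noteq> 0) \<longrightarrow>
        (\<Sum>i\<in>S. \<Sum>j\<in>S. cnj (x i) * M i j * x j) > 0"
      using assms(1) unfolding hpd_def S_def by blast
    have "(\<Sum>k\<in>S. \<Sum>l\<in>S. cnj (X k j) * M k l * X l j) > 0"
      using H[rule_format, of "\<lambda>k. X k j"] ij Xij by blast
    moreover have "mul S (tH X) (mul S Mr X) j j = (\<Sum>k\<in>S. \<Sum>l\<in>S. cnj (X k j) * M k l * X l j)"
      using ij by (simp add: mul_def rs_def tH_def Mr_def sum_distrib_left mult.assoc cong: sum.cong)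
    ultimately show False using z by simp
  qed
  have injM: "Y = 0" if "rs S Y = Y" "mul S Mr Y = 0" for Y
    using pos[OF that(1)] that(2) by simp
  obtain k c cs where kc: "c \<noteq> 0" "mul S (pw S Mr k) (sc c (one S) + mul S Mr (heval S cs Mr)) = 0"
    using annihilator[OF fin] by blast
  define H where "H = heval S cs Mr"
  have rZ: "rs S (sc c (one S) + mul S Mr H) = sc c (one S) + mul S Mr H"
    by (simp add: H_def rs_add rs_sc)
  have "sc c (one S) + mul S Mr H = 0"
  proof -
    have injM': "\<forall>Y. rs S Y = Y \<longrightarrow> mul S Mr Y = 0 \<longrightarrow> Y = 0" using injM by blast
    have "mul S (pw S Mr k) (sc c (one S) + mul S Mr H) = 0" unfolding H_def by (rule kc(2))
    then show ?thesis by (rule pw_cancel[OF injM' fin rZ])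
  qed
  then have MH: "mul S Mr H = - sc c (one S)" by (simp only: add_eq_0_iff)
  define Mi where "Mi = sc (-1/c) H"
  have MMi: "mul S Mr Mi = one S" by (simp only: Mi_def mul_sc2 MH sc_inv[OF kc(1)])
  have HM: "mul S H Mr = mul S Mr H" using heval_comm[OF fin rsM, of cs] by (simp add: H_def)
  have MiM: "mul S Mi Mr = one S" by (simp only: Mi_def mul_sc1 HM MH sc_inv[OF kc(1)])
  have MMi': "mul S M Mi = one S" using MMi by (simp add: Mr_def)
  have MiM': "mul S Mi M = one S" using MiM by (simp add: Mr_def)
  have "is_tinv I M Mi"
    unfolding is_tinv_def teqS rsE one_def[symmetric]
    using MMi' MiM' by simp
  then have "is_tinv I M (tinv I M)" unfolding tinv_def by (rule someI[of "is_tinv I M"])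
  define Ti where "Ti = rs S (tinv I M)"
  have MT: "mul S Mr Ti = one S" and TM: "mul S Ti Mr = one S"
    using \<open>is_tinv I M (tinv I M)\<close>
    unfolding is_tinv_def teqS rsE
    by (simp_all add: Ti_def Mr_def one_def)
  interpret wctx S Mr Ti
    by (rule wctx.intro[OF fin rsM _ hM MT TM pos]) (simp add: Ti_def)
  define Ar where "Ar = rs S A"
  have rsA: "rs S Ar = Ar" by (simp add: Ar_def)
  have rwct: "rs S (wct I M A) = adj Ar"
  proof -
    have "rs S (wct I M A) = mul S (mul S (tinv I M) (tH A)) M" by (simp add: wct_def rsE mulE1)
    also have "\<dots> = mul S Ti (mul S (tH Ar) Mr)" by (simp add: Ti_def Ar_def Mr_def rs_tH[symmetric] mul_assoc)
    also have "\<dots> = adj Ar" by (simp only: adj_def)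
    finally show ?thesis .
  qed
  have nor: "mul S (adj Ar) Ar = mul S Ar (adj Ar)"
    using assms(2) unfolding teqS rsE
    by (subst (asm) (1 2) mul_rsb) (simp add: rwct Ar_def)
  have wmp_iff: "is_wmp I M A X \<longleftrightarrow>
     (mul S (mul S Ar (rs S X)) Ar = Ar \<and> mul S (mul S (rs S X) Ar) (rs S X) = rs S X \<and>
      adj (mul S Ar (rs S X)) = mul S Ar (rs S X) \<and> adj (mul S (rs S X) Ar) = mul S (rs S X) Ar)" for X
  proof -
    have e1: "rs S (einstein I (einstein I A X) A) = mul S (mul S Ar (rs S X)) Ar"
      by (simp add: rsE mulE1 mulE2 Ar_def)
    have e2: "rs S (einstein I (einstein I X A) X) = mul S (mul S (rs S X) Ar) (rs S X)"
      by (simp add: rsE mulE1 mulE2 Ar_def)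
    have e3: "rs S (einstein I M (einstein I A X)) = mul S Mr (mul S Ar (rs S X))"
      by (simp add: rsE mulE1 mulE2 Ar_def Mr_def)
    have e4: "rs S (einstein I M (einstein I X A)) = mul S Mr (mul S (rs S X) Ar)"
      by (simp add: rsE mulE1 mulE2 Ar_def Mr_def)
    show ?thesis
      unfolding is_wmp_def teqS rs_tH e1 e2 e3 e4
      by (simp add: herm_iff Ar_def[symmetric])
  qed
  obtain k2 c2 cs2 where kc2: "c2 \<noteq> 0" "mul S (pw S Ar k2) (sc c2 (one S) + mul S Ar (heval S cs2 Ar)) = 0"
    using annihilator[OF fin] by blast
  define H2 where "H2 = heval S cs2 Ar"
  have "mul S Ar (sc c2 (one S) + mul S Ar H2) = 0"
  proof (cases k2)
    case 0
    then show ?thesis using kc2(2) by (simp add: H2_def mul_one1[OF fin] rs_add rs_sc)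
  next
    case (Suc k')
    then show ?thesis using kc2(2) pw_norm[OF rsA nor, of k'] by (simp add: H2_def)
  qed
  then have "sc c2 Ar + mul S Ar (mul S Ar H2) = 0"
    by (simp only: mul_add2 mul_sc2 one_r[OF rsA])
  then have AAH: "mul S Ar (mul S Ar H2) = - sc c2 Ar" by (simp only: add_eq_0_iff)
  have e: "mul S Ar (mul S Ar (sc (-1/c2) H2)) = Ar" by (simp only: mul_sc2 AAH sc_inv[OF kc2(1)])
  have HA: "mul S Ar H2 = mul S H2 Ar" using heval_comm[OF fin rsA, of cs2] by (simp add: H2_def)
  have c: "mul S Ar (sc (-1/c2) H2) = mul S (sc (-1/c2) H2) Ar"
    by (simp only: mul_sc1 mul_sc2 HA)
  obtain X0 where X0: "rs S X0 = X0" "mul S (mul S Ar X0) Ar = Ar" "mul S (mul S X0 Ar) X0 = X0"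
      "adj (mul S Ar X0) = mul S Ar X0" "adj (mul S X0 Ar) = mul S X0 Ar"
  proof -
    have r0: "rs S (sc (-1/c2) H2) = sc (-1/c2) H2" by (simp only: rs_sc H2_def rs_heval)
    show ?thesis using exists_wmp[OF rsA nor r0 c e] that by blast
  qed
  have "is_wmp I M A X0" using X0 by (simp add: wmp_iff)
  then have "is_wmp I M A (wmp I M A)" unfolding wmp_def by (rule someI[of "is_wmp I M A"])
  then have W: "mul S (mul S Ar (rs S (wmp I M A))) Ar = Ar" "mul S (mul S (rs S (wmp I M A)) Ar) (rs S (wmp I M A)) = rs S (wmp I M A)"
      "adj (mul S Ar (rs S (wmp I M A))) = mul S Ar (rs S (wmp I M A))" "adj (mul S (rs S (wmp I M A)) Ar) = mul S (rs S (wmp I M A)) Ar"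
    by (simp_all add: wmp_iff)
  have "mul S Ar (rs S (wmp I M A)) = mul S (rs S (wmp I M A)) Ar"
    by (rule commute_wmp[OF rsA nor _ W]) simp
  then show ?thesis
    unfolding teqS rsE mulE1 mulE2 by (simp add: Ar_def)
qed

end
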